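(* Let $H$ be a fixed connected graph, $p_n,q_n\in(0,1)$, and for integers $r\ge1$ let $$\mathcal N_n(r)=\sum_{H_1,\dots,H_r\in\mathcal H_n}p_n^{|V(\bigcup_{a=1}^rH_a)|}q_n^{|E(\bigcup_{a=1}^rH_a)|}\mathbf 1\Big\{\textstyle\bigcup_{a=1}^rH_a\text{ is connected}\Big\}.$$ Then for every integer $r\ge2$, whenever $np_nq_n^{m(H)}\ge1$, $$\mathcal N_n(r)\lesssim_{H,r}\mathcal N_n(r-1)\sqrt{\mathcal N_n(2)}\,\big(np_nq_n^{m(H)}\big)^{-1/2}.$$
   Context: $\mathcal H_n$ is the collection of all labeled subgraphs of the complete graph $K_n$ on $\{1,\dots,n\}$ that are isomorphic to $H$. For graphs $F_1,F_2$, $F_1\cup F_2=(V(F_1)\cup V(F_2),E(F_1)\cup E(F_2))$. $m(H)=\max_{H_1\subseteq H}\frac{|E(H_1)|}{|V(H_1)|}$ over nonempty subgraphs $H_1$ of $H$. $\lesssim_{H,r}$ means up to a constant depending only on $H$ and $r$. *)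

theory Defs
  imports Complex_Main "HOL-Library.FuncSet"
begin

type_synonym 'a graph = "'a set \<times> 'a set set"

definition is_graph :: "'a graph \<Rightarrow> bool" where
  "is_graph G \<longleftrightarrow> finite (fst G) \<and> (\<forall>e\<in>snd G. e \<subseteq> fst G \<and> card e = 2)"

definition connected_graph :: "'a graph \<Rightarrow> bool" where
  "connected_graph G \<longleftrightarrow> fst G \<noteq> {} \<and>
     (\<forall>u\<in>fst G. \<forall>v\<in>fst G. (\<lambda>x y. {x, y} \<in> snd G)\<^sup>*\<^sup>* u v)"

definition subgraph :: "'a graph \<Rightarrow> 'a graph \<Rightarrow> bool" where
  "subgraph G1 G \<longleftrightarrow> fst G1 \<subseteq> fst G \<and> snd G1 \<subseteq> snd G \<and> (\<forall>e\<in>snd G1. e \<subseteq> fst G1)"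

definition graph_iso :: "'a graph \<Rightarrow> 'b graph \<Rightarrow> bool" where
  "graph_iso G G' \<longleftrightarrow> (\<exists>f. bij_betw f (fst G) (fst G') \<and> snd G' = (\<lambda>e. f ` e) ` snd G)"

definition max_density :: "'a graph \<Rightarrow> real" where
  "max_density H = Max {real (card (snd H1)) / real (card (fst H1)) | H1.
                         subgraph H1 H \<and> fst H1 \<noteq> {}}"

definition complete_graph :: "nat \<Rightarrow> nat graph" where
  "complete_graph n = ({1..n}, {e. e \<subseteq> {1..n} \<and> card e = 2})"

definition copies :: "'a graph \<Rightarrow> nat \<Rightarrow> nat graph set" where
  "copies H n = {G. subgraph G (complete_graph n) \<and> graph_iso H G}"

definition union_graph :: "nat \<Rightarrow> (nat \<Rightarrow> 'b graph) \<Rightarrow> 'b graph" where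
  "union_graph r F = ((\<Union>a<r. fst (F a)), (\<Union>a<r. snd (F a)))"

definition NN :: "'a graph \<Rightarrow> nat \<Rightarrow> real \<Rightarrow> real \<Rightarrow> nat \<Rightarrow> real" where
  "NN H n p q r = (\<Sum>F \<in> PiE {..<r} (\<lambda>_. copies H n).
      p ^ card (fst (union_graph r F)) * q ^ card (snd (union_graph r F)) *
      (if connected_graph (union_graph r F) then 1 else 0))"

end

theory Submission imports Defs begin

definition U :: "'i set \<Rightarrow> ('i \<Rightarrow> 'b graph) \<Rightarrow> 'b graph" where
  "U S F = ((\<Union>a\<in>S. fst (F a)), (\<Union>a\<in>S. snd (F a)))"

lemma union_graph_U: "union_graph r F = U {..<r} F"
  by (simp add: union_graph_def U_def)

lemma reach_mono:
  assumes "(\<lambda>x y. {x, y} \<in> E1)\<^sup>*\<^sup>* u v" "E1 \<subseteq> E2"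
  shows "(\<lambda>x y. {x, y} \<in> E2)\<^sup>*\<^sup>* u v"
  using assms(1)
proof (induct rule: rtranclp_induct)
  case base then show ?case by simp
next
  case (step y z) then show ?case using assms(2)
    by (meson rtranclp.rtrancl_into_rtrancl subsetD)
qed

lemma conn_union:
  assumes c1: "connected_graph G1" and c2: "connected_graph G2"
    and w: "w \<in> fst G1" "w \<in> fst G2"
  shows "connected_graph (fst G1 \<union> fst G2, snd G1 \<union> snd G2)"
proof -
  let ?R = "(\<lambda>x y. {x, y} \<in> snd G1 \<union> snd G2)\<^sup>*\<^sup>*"
  have r1: "?R x y" if "x \<in> fst G1" "y \<in> fst G1" for x y
    using c1 that reach_mono[of "snd G1" x y "snd G1 \<union> snd G2"] unfolding connected_graph_def by auto
  have r2: "?R x y" if "x \<in> fst G2" "y \<in> fst G2" for x y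
    using c2 that reach_mono[of "snd G2" x y "snd G1 \<union> snd G2"] unfolding connected_graph_def by auto
  have "?R x y" if "x \<in> fst G1 \<union> fst G2" "y \<in> fst G1 \<union> fst G2" for x y
  proof -
    have "?R x w" using that r1 r2 w by blast
    moreover have "?R w y" using that r1 r2 w by blast
    ultimately show ?thesis by (rule rtranclp_trans)
  qed
  then show ?thesis using w by (auto simp: connected_graph_def)
qed

lemma crossing:
  assumes conn: "connected_graph (U A F)" and SA: "S \<subseteq> A" and s: "s \<in> S" "fst (F s) \<noteq> {}"
    and b: "b \<in> A - S" "fst (F b) \<noteq> {}"
    and es: "\<forall>c\<in>A. \<forall>e\<in>snd (F c). e \<subseteq> fst (F c)"
  shows "\<exists>b\<in>A-S. fst (F b) \<inter> fst (U S F) \<noteq> {}"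
proof (rule ccontr)
  assume nb: "\<not> ?thesis"
  obtain u where u: "u \<in> fst (F s)" using s by auto
  obtain v where v: "v \<in> fst (F b)" using b by auto
  have uS: "u \<in> fst (U S F)" using u s by (auto simp: U_def)
  have "(\<lambda>x y. {x, y} \<in> snd (U A F))\<^sup>*\<^sup>* u v"
    using conn u v s SA b unfolding connected_graph_def U_def by auto
  then have "v \<in> fst (U S F)"
  proof (induct rule: rtranclp_induct)
    case base then show ?case using uS .
  next
    case (step y z)
    then obtain c where c: "c \<in> A" "{y, z} \<in> snd (F c)" by (auto simp: U_def)
    then have "{y, z} \<subseteq> fst (F c)" using es by blast
    then have yz: "y \<in> fst (F c)" "z \<in> fst (F c)" by auto
    show ?case
    proof (cases "c \<in> S")
      case True then show ?thesis using yz by (auto simp: U_def)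
    next
      case False
      then have "c \<in> A - S" using c by simp
      then have "fst (F c) \<inter> fst (U S F) = {}" using nb by blast
      then show ?thesis using yz step(3) by blast
    qed
  qed
  then have "fst (F b) \<inter> fst (U S F) \<noteq> {}" using v by blast
  then show False using nb b(1) by metis
qed

lemma U_insert: "U (insert b S) F = (fst (F b) \<union> fst (U S F), snd (F b) \<union> snd (U S F))"
  by (simp add: U_def)

lemma leaf:
  fixes r :: nat and F :: "nat \<Rightarrow> 'b graph"
  assumes r: "r \<ge> 2" and cF: "\<forall>i<r. connected_graph (F i)"
    and es: "\<forall>c<r. \<forall>e\<in>snd (F c). e \<subseteq> fst (F c)"
    and conn: "connected_graph (U {..<r} F)"
  shows "\<exists>a<r. connected_graph (U ({..<r}-{a}) F) \<and> fst (F a) \<inter> fst (U ({..<r}-{a}) F) \<noteq> {}"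
proof -
  define Ss where "Ss = {S. S \<subseteq> {..<r} \<and> S \<noteq> {..<r} \<and> S \<noteq> {} \<and> connected_graph (U S F)}"
  have U0: "U {0} F = F 0" by (simp add: U_def)
  have "{0} \<noteq> {..<r}" using r by (metis lessThan_iff less_numeral_extra(3) numeral_le_one_iff one_less_numeral_iff semiring_norm(68) singleton_iff not_less zero_less_numeral le_trans insert_iff Suc_1 less_Suc_eq_le One_nat_def lessI)
  moreover have "{0} \<subseteq> {..<r}" using r by auto
  moreover have "connected_graph (U {0} F)" unfolding U0 using cF r by auto
  ultimately have S0: "{0} \<in> Ss" unfolding Ss_def by blast
  have "Ss \<subseteq> Pow {..<r}" unfolding Ss_def by blast
  then have finSs: "finite Ss" by (rule finite_subset) simp
  define m where "m = Max (card ` Ss)"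
  have "m \<in> card ` Ss" unfolding m_def using finSs S0 by (intro Max_in) auto
  then obtain S where S: "S \<in> Ss" "card S = m" by blast
  have mx: "card S' \<le> m" if "S' \<in> Ss" for S'
    using finSs that unfolding m_def by simp
  have Sp: "S \<subseteq> {..<r}" "S \<noteq> {..<r}" "S \<noteq> {}" "connected_graph (U S F)"
    using S(1) unfolding Ss_def by auto
  obtain s where s: "s \<in> S" using Sp by auto
  obtain b0 where b0: "b0 \<in> {..<r} - S" using Sp by auto
  have ne: "fst (F i) \<noteq> {}" if "i < r" for i using cF that by (simp add: connected_graph_def)
  have sr: "s < r" using s Sp(1) by auto
  have es': "\<forall>c\<in>{..<r}. \<forall>e\<in>snd (F c). e \<subseteq> fst (F c)" using es by simp
  obtain b where b: "b \<in> {..<r} - S" "fst (F b) \<inter> fst (U S F) \<noteq> {}"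
    using crossing[OF conn Sp(1) s ne[OF sr] b0 ne es'] b0 by auto
  have cb: "connected_graph (U (insert b S) F)"
  proof -
    obtain w where "w \<in> fst (F b)" "w \<in> fst (U S F)" using b(2) by blast
    then show ?thesis unfolding U_insert using conn_union[of "F b" "U S F"] b(1) cF Sp(4) by simp
  qed
  have "insert b S = {..<r}"
  proof (rule ccontr)
    assume "insert b S \<noteq> {..<r}"
    then have "insert b S \<in> Ss" using cb b(1) Sp(1) unfolding Ss_def by auto
    then have "card (insert b S) \<le> m" by (rule mx)
    moreover have "card (insert b S) = Suc (card S)"
      using b(1) finite_subset[OF Sp(1)] by simp
    ultimately show False using S(2) by simp
  qed
  then have "S = {..<r} - {b}" using b(1) by auto
  then show ?thesis using b Sp(4) by (intro exI[of _ b]) auto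
qed

locale gs =
  fixes V :: "'a set" and E :: "'a set set"
  assumes finV: "finite V" and Esub: "\<And>e. e \<in> E \<Longrightarrow> e \<subseteq> V \<and> card e = 2"
    and Vne: "V \<noteq> {}" and connH: "connected_graph (V, E)"
begin

definition injs :: "nat \<Rightarrow> ('a \<Rightarrow> nat) set" where
  "injs n = {g \<in> V \<rightarrow>\<^sub>E {1..n}. inj_on g V}"

definition cp :: "('a \<Rightarrow> nat) \<Rightarrow> nat graph" where
  "cp g = (g ` V, (\<lambda>e. g ` e) ` E)"

lemma finE: "finite E"
proof -
  have "E \<subseteq> Pow V" using Esub by auto
  thus ?thesis by (metis finV finite_Pow_iff finite_subset)
qed

lemma fin_injs: "finite (injs n)"
  unfolding injs_def using finite_PiE[OF finV, of "\<lambda>_. {1..n}"] by simp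

lemma cp_copy: assumes "g \<in> injs n" shows "cp g \<in> copies (V,E) n"
proof -
  have g: "g \<in> V \<rightarrow>\<^sub>E {1..n}" "inj_on g V" using assms by (auto simp: injs_def)
  have "card (g ` e) = 2" if "e \<in> E" for e
    using Esub[OF that] g(2) by (metis card_image inj_on_subset)
  moreover have "g ` e \<subseteq> {1..n}" if "e \<in> E" for e using Esub[OF that] g(1) by auto
  moreover have "\<And>e. e \<in> E \<Longrightarrow> g ` e \<subseteq> g ` V" using Esub by (simp add: image_mono)
  ultimately have sg: "subgraph (cp g) (complete_graph n)"
    using g(1) Esub unfolding subgraph_def cp_def complete_graph_def by auto
  have "graph_iso (V,E) (cp g)"
    unfolding graph_iso_def cp_def using g(2) inj_on_imp_bij_betw by (metis fst_conv snd_conv)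
  with sg show ?thesis by (simp add: copies_def)
qed

lemma copies_eq: "copies (V,E) n = cp ` injs n"
proof
  show "cp ` injs n \<subseteq> copies (V,E) n" using cp_copy by auto
  show "copies (V,E) n \<subseteq> cp ` injs n"
  proof
    fix G assume "G \<in> copies (V,E) n"
    then have sg: "subgraph G (complete_graph n)" and gi: "graph_iso (V,E) G"
      by (auto simp: copies_def)
    obtain f where f: "bij_betw f V (fst G)" "snd G = (\<lambda>e. f ` e) ` E"
      using gi by (auto simp: graph_iso_def)
    define g where "g = restrict f V"
    have "fst G \<subseteq> {1..n}" using sg by (auto simp: subgraph_def complete_graph_def)
    then have "g \<in> injs n" using f(1) unfolding injs_def g_def bij_betw_def
      by auto
    moreover have "cp g = G"
    proof -
      have "g ` V = fst G" using f(1) by (auto simp: g_def bij_betw_def)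
      moreover have "(\<lambda>e. g ` e) ` E = snd G" unfolding f(2) g_def
        using Esub by (intro image_cong) auto
      ultimately show ?thesis by (simp add: cp_def prod_eq_iff)
    qed
    ultimately show "G \<in> cp ` injs n" by blast
  qed
qed


definition EK :: "'a set \<Rightarrow> 'a set set" where "EK K = {ed \<in> E. ed \<subseteq> K}"

lemma EsubPow: "E \<subseteq> Pow V" using Esub by auto

lemma inj_img: "g \<in> injs n \<Longrightarrow> inj_on (image g) E"
  using inj_on_image_Pow[of g V] EsubPow inj_on_subset by (auto simp: injs_def)

lemma card_cp: assumes "g \<in> injs n"
  shows "card (fst (cp g)) = card V" "card (snd (cp g)) = card E"
  using assms inj_img[OF assms] by (auto simp: cp_def injs_def card_image)

lemma conn_cp: assumes g: "g \<in> injs n" shows "connected_graph (cp g)"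
proof -
  have step: "(\<lambda>x y. {x, y} \<in> snd (cp g))\<^sup>*\<^sup>* (g u) (g w)"
    if "(\<lambda>x y. {x, y} \<in> E)\<^sup>*\<^sup>* u w" for u w
    using that
  proof (induct rule: rtranclp_induct)
    case base then show ?case by simp
  next
    case (step y z)
    have "g ` {y, z} \<in> snd (cp g)" using step(2) unfolding cp_def snd_conv by (rule imageI)
    then have "{g y, g z} \<in> snd (cp g)" by simp
    then show ?case using step(3) by (meson rtranclp.rtrancl_into_rtrancl)
  qed
  show ?thesis unfolding connected_graph_def
  proof (intro conjI ballI)
    show "fst (cp g) \<noteq> {}" using Vne by (simp add: cp_def)
  next
    fix x y assume "x \<in> fst (cp g)" "y \<in> fst (cp g)"
    then obtain u w where "u \<in> V" "w \<in> V" "x = g u" "y = g w" by (auto simp: cp_def)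
    then show "(\<lambda>x y. {x, y} \<in> snd (cp g))\<^sup>*\<^sup>* x y"
      using connH step unfolding connected_graph_def by auto
  qed
qed

lemma fin_copies: "finite (copies (V,E) n)"
  unfolding copies_eq using fin_injs by simp

lemma copy_props: assumes "b \<in> copies (V,E) n"
  shows "connected_graph b" "\<forall>ed\<in>snd b. ed \<subseteq> fst b" "finite (fst b)"
    "card (fst b) = card V" "card (snd b) = card E" "finite (snd b)"
proof -
  obtain g where g: "g \<in> injs n" "b = cp g" using assms copies_eq by auto
  show "connected_graph b" using conn_cp g by simp
  show "\<forall>ed\<in>snd b. ed \<subseteq> fst b" using g Esub by (auto simp: cp_def)
  show "finite (fst b)" using g finV by (simp add: cp_def)
  show "card (fst b) = card V" "card (snd b) = card E" using card_cp g by auto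
  show "finite (snd b)" using g finE by (simp add: cp_def)
qed

lemma v_pos: "card V \<ge> 1" using finV Vne by (simp add: Suc_le_eq card_gt_0_iff)

lemma finEK: "finite (EK K)" using finE by (simp add: EK_def)

lemma EK_card: "card (EK K) \<le> card E"
  using finE by (auto simp: EK_def intro: card_mono)

lemma EK_V: "EK V = E" using Esub by (auto simp: EK_def)

lemma density: assumes "K \<subseteq> V" "K \<noteq> {}"
  shows "real (card (EK K)) \<le> max_density (V,E) * real (card K)"
proof -
  define Hs where "Hs = {H1. subgraph H1 (V,E) \<and> fst H1 \<noteq> {}}"
  define f where "f = (\<lambda>H1::'a graph. real (card (snd H1)) / real (card (fst H1)))"
  have eq: "{real (card (snd H1)) / real (card (fst H1)) | H1. subgraph H1 (V,E) \<and> fst H1 \<noteq> {}} = f ` Hs"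
    unfolding Hs_def f_def by blast
  have "Hs \<subseteq> Pow V \<times> Pow E" unfolding Hs_def subgraph_def by auto
  then have "finite Hs" by (rule finite_subset) (simp add: finV finE)
  moreover have "(K, EK K) \<in> Hs" using assms unfolding Hs_def subgraph_def EK_def by auto
  ultimately have "f (K, EK K) \<le> max_density (V,E)"
    unfolding max_density_def eq by (intro Max_ge) auto
  moreover have "finite K" using assms(1) finV by (rule finite_subset)
  then have "real (card K) > 0" using assms(2) by (simp add: card_gt_0_iff)
  ultimately show ?thesis unfolding f_def by (simp add: divide_le_eq)
qed

lemma density0: "0 \<le> max_density (V,E)"
proof -
  have "real (card (EK V)) \<le> max_density (V,E) * real (card V)" using density Vne by simp
  moreover have "real (card V) > 0" using v_pos by simp
  ultimately have "0 \<le> max_density (V,E) * real (card V)" "real (card V) > 0"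
    using of_nat_0_le_iff order_trans by blast+
  then show ?thesis by (simp add: zero_le_mult_iff)
qed

definition Kf :: "nat set \<Rightarrow> ('a \<Rightarrow> nat) \<Rightarrow> 'a set" where "Kf VG g = {x \<in> V. g x \<in> VG}"

lemma phi_bound:
  assumes g: "g \<in> injs n" and es: "\<forall>ed\<in>EG. ed \<subseteq> VG" and p: "0 \<le> p" "p \<le> (1::real)"
    and q: "0 \<le> q" "q \<le> (1::real)"
  shows "p ^ card (fst (cp g) - VG) * q ^ card (snd (cp g) - EG)
     \<le> p ^ (card V - card (Kf VG g)) * q ^ (card E - card (EK (Kf VG g)))"
proof -
  let ?K = "Kf VG g"
  have inj: "inj_on g V" using g by (simp add: injs_def)
  have KV: "?K \<subseteq> V" by (auto simp: Kf_def)
  have finK: "finite ?K" using KV finV by (rule finite_subset)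
  have "fst (cp g) - VG = g ` (V - ?K)" by (auto simp: cp_def Kf_def)
  moreover have "card (g ` (V - ?K)) = card (V - ?K)"
    using inj by (meson Diff_subset card_image inj_on_subset)
  ultimately have c1: "card (fst (cp g) - VG) = card V - card ?K"
    using KV finK by (simp add: card_Diff_subset)
  have sub: "snd (cp g) \<inter> EG \<subseteq> image g ` EK ?K"
  proof
    fix x assume x: "x \<in> snd (cp g) \<inter> EG"
    then obtain ed where ed: "ed \<in> E" "x = g ` ed" by (auto simp: cp_def)
    have "g ` ed \<subseteq> VG" using x es ed by auto
    then have "ed \<subseteq> ?K" using ed Esub by (auto simp: Kf_def)
    then show "x \<in> image g ` EK ?K" using ed by (auto simp: EK_def)
  qed
  have "card (snd (cp g) \<inter> EG) \<le> card (EK ?K)"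
    using card_mono[OF finite_imageI[OF finEK] sub] card_image_le[OF finEK, of "image g" ?K] by linarith
  moreover have "card (snd (cp g) - EG) = card (snd (cp g)) - card (snd (cp g) \<inter> EG)"
    by (rule card_Diff_subset_Int) (simp add: cp_def finE)
  ultimately have c2: "card E - card (EK ?K) \<le> card (snd (cp g) - EG)"
    using card_cp(2)[OF g] by linarith
  have "p ^ card (fst (cp g) - VG) \<le> p ^ (card V - card ?K)" using c1 by simp
  moreover have "q ^ card (snd (cp g) - EG) \<le> q ^ (card E - card (EK ?K))"
    using c2 q by (rule power_decreasing)
  ultimately show ?thesis using p q by (intro mult_mono) auto
qed

lemma count_K:
  assumes K: "K \<subseteq> V" and fin: "finite VG"
  shows "card {g \<in> injs n. Kf VG g = K} \<le> card VG ^ card K * n ^ (card V - card K)"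
proof -
  let ?P = "PiE V (\<lambda>x. if x \<in> K then VG else {1..n})"
  have "{g \<in> injs n. Kf VG g = K} \<subseteq> ?P"
  proof
    fix g assume g: "g \<in> {g \<in> injs n. Kf VG g = K}"
    then have "g \<in> V \<rightarrow>\<^sub>E {1..n}" "Kf VG g = K" by (auto simp: injs_def)
    then show "g \<in> ?P" by (auto simp: Kf_def PiE_def Pi_def)
  qed
  moreover have "finite ?P" using finV fin by (intro finite_PiE) auto
  ultimately have "card {g \<in> injs n. Kf VG g = K} \<le> card ?P" by (rule card_mono[rotated])
  also have "card ?P = (\<Prod>x\<in>V. card (if x \<in> K then VG else {1..n}))" by (rule card_PiE[OF finV])
  also have "... = (\<Prod>x\<in>V. if x \<in> K then card VG else n)" by (rule prod.cong) auto
  also have "... = (\<Prod>x\<in>V \<inter> {x. x \<in> K}. card VG) * (\<Prod>x\<in>V \<inter> - {x. x \<in> K}. n)"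
    by (rule prod.If_cases[OF finV])
  also have "... = card VG ^ card K * n ^ (card V - card K)"
  proof -
    have "V \<inter> {x. x \<in> K} = K" using K by auto
    moreover have "V \<inter> - {x. x \<in> K} = V - K" by auto
    moreover have "card (V - K) = card V - card K"
      using K finV by (meson card_Diff_subset finite_subset)
    ultimately show ?thesis by simp
  qed
  finally show ?thesis .
qed

lemma M_bound:
  assumes fin: "finite VG" and L: "card VG \<le> L" and es: "\<forall>ed\<in>EG. ed \<subseteq> VG"
    and p: "0 \<le> p" "p \<le> (1::real)" and q: "0 \<le> q" "q \<le> (1::real)"
  shows "(\<Sum>b\<in>{b \<in> copies (V,E) n. fst b \<inter> VG \<noteq> {}}. p ^ card (fst b - VG) * q ^ card (snd b - EG))
     \<le> (\<Sum>K\<in>Pow V - {{}}. real L ^ card K * ((real n * p) ^ (card V - card K) * q ^ (card E - card (EK K))))"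
proof -
  define phi where "phi b = p ^ card (fst b - VG) * q ^ card (snd b - EG)" for b :: "nat graph"
  define I' where "I' = {g \<in> injs n. fst (cp g) \<inter> VG \<noteq> {}}"
  have eqC: "{b \<in> copies (V,E) n. fst b \<inter> VG \<noteq> {}} = cp ` I'" unfolding I'_def copies_eq by blast
  have finI': "finite I'" using fin_injs by (simp add: I'_def)
  have "(\<Sum>b\<in>cp ` I'. phi b) \<le> (\<Sum>g\<in>I'. phi (cp g))"
    using sum_image_le[OF finI', of phi cp] p q by (simp add: phi_def o_def)
  also have "... = (\<Sum>K\<in>Kf VG ` I'. \<Sum>g\<in>{g\<in>I'. Kf VG g = K}. phi (cp g))"
    by (rule sum.image_gen[OF finI'])
  also have "... \<le> (\<Sum>K\<in>Pow V - {{}}. \<Sum>g\<in>{g\<in>I'. Kf VG g = K}. phi (cp g))"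
  proof (rule sum_mono2)
    show "finite (Pow V - {{}})" using finV by simp
    show "Kf VG ` I' \<subseteq> Pow V - {{}}" by (auto simp: I'_def Kf_def cp_def)
    show "\<And>K. K \<in> Pow V - {{}} - Kf VG ` I' \<Longrightarrow> 0 \<le> (\<Sum>g\<in>{g\<in>I'. Kf VG g = K}. phi (cp g))"
      using p q by (auto simp: phi_def intro!: sum_nonneg)
  qed
  also have "... \<le> (\<Sum>K\<in>Pow V - {{}}. real L ^ card K * ((real n * p) ^ (card V - card K) * q ^ (card E - card (EK K))))"
  proof (rule sum_mono)
    fix K assume K: "K \<in> Pow V - {{}}"
    let ?w = "p ^ (card V - card K) * q ^ (card E - card (EK K))"
    have "(\<Sum>g\<in>{g\<in>I'. Kf VG g = K}. phi (cp g)) \<le> (\<Sum>g\<in>{g\<in>I'. Kf VG g = K}. ?w)"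
    proof (rule sum_mono)
      fix g assume "g \<in> {g\<in>I'. Kf VG g = K}"
      then have "g \<in> injs n" "Kf VG g = K" by (auto simp: I'_def)
      then show "phi (cp g) \<le> ?w" using phi_bound[of g n EG VG p q] es p q by (simp add: phi_def)
    qed
    also have "... = real (card {g\<in>I'. Kf VG g = K}) * ?w" by simp
    also have "... \<le> real (card VG ^ card K * n ^ (card V - card K)) * ?w"
    proof (rule mult_right_mono)
      have "{g\<in>I'. Kf VG g = K} \<subseteq> {g \<in> injs n. Kf VG g = K}" by (auto simp: I'_def)
      then have "card {g\<in>I'. Kf VG g = K} \<le> card {g \<in> injs n. Kf VG g = K}"
        by (rule card_mono[rotated]) (use fin_injs in simp)
      also have "... \<le> card VG ^ card K * n ^ (card V - card K)" using count_K K fin by blast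
      finally show "real (card {g\<in>I'. Kf VG g = K}) \<le> real (card VG ^ card K * n ^ (card V - card K))"
        by (simp only: of_nat_le_iff)
      show "0 \<le> ?w" using p q by simp
    qed
    also have "... \<le> real L ^ card K * ((real n * p) ^ (card V - card K) * q ^ (card E - card (EK K)))"
    proof -
      have "real (card VG) ^ card K \<le> real L ^ card K" using L by (intro power_mono) auto
      then have "real (card VG) ^ card K * (real n ^ (card V - card K) * ?w)
          \<le> real L ^ card K * (real n ^ (card V - card K) * ?w)"
        by (rule mult_right_mono) (use p q in simp)
      then show ?thesis by (simp add: power_mult_distrib mult_ac)
    qed
    finally show "(\<Sum>g\<in>{g\<in>I'. Kf VG g = K}. phi (cp g)) \<le> real L ^ card K * ((real n * p) ^ (card V - card K) * q ^ (card E - card (EK K)))" .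
  qed
  finally show ?thesis unfolding eqC phi_def .
qed

lemma fiber_sum:
  assumes S: "S \<subseteq> injs n" and nn: "\<And>y. 0 \<le> phi y"
  shows "(\<Sum>g\<in>S. phi (cp g)) \<le> real (card V ^ card V) * (\<Sum>y\<in>cp ` S. phi y)"
proof -
  have finS: "finite S" using S fin_injs finite_subset by blast
  have "(\<Sum>g\<in>S. phi (cp g)) = (\<Sum>y\<in>cp ` S. \<Sum>g\<in>{g\<in>S. cp g = y}. phi (cp g))"
    by (rule sum.image_gen[OF finS])
  also have "... = (\<Sum>y\<in>cp ` S. real (card {g\<in>S. cp g = y}) * phi y)"
  proof (rule sum.cong[OF refl])
    fix y assume "y \<in> cp ` S"
    have "(\<Sum>g\<in>{g\<in>S. cp g = y}. phi (cp g)) = (\<Sum>g\<in>{g\<in>S. cp g = y}. phi y)"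
      by (rule sum.cong) auto
    then show "(\<Sum>g\<in>{g\<in>S. cp g = y}. phi (cp g)) = real (card {g\<in>S. cp g = y}) * phi y" by simp
  qed
  also have "... \<le> (\<Sum>y\<in>cp ` S. real (card V ^ card V) * phi y)"
  proof (rule sum_mono)
    fix y assume y: "y \<in> cp ` S"
    then obtain g0 where g0: "g0 \<in> S" "y = cp g0" by auto
    have "{g\<in>S. cp g = y} \<subseteq> PiE V (\<lambda>_. fst y)"
    proof
      fix g assume g: "g \<in> {g\<in>S. cp g = y}"
      then have "g \<in> injs n" "fst (cp g) = fst y" using S by auto
      then show "g \<in> PiE V (\<lambda>_. fst y)" by (auto simp: injs_def cp_def PiE_def Pi_def)
    qed
    moreover have "finite (PiE V (\<lambda>_. fst y))" using finV g0 by (intro finite_PiE) (auto simp: cp_def)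
    ultimately have "card {g\<in>S. cp g = y} \<le> card (PiE V (\<lambda>_. fst y))" by (rule card_mono[rotated])
    also have "... = card (fst y) ^ card V" by (simp add: card_PiE[OF finV])
    also have "... = card V ^ card V" using card_cp(1)[of g0 n] g0 S by auto
    finally have "real (card {g\<in>S. cp g = y}) \<le> real (card V ^ card V)" by (simp only: of_nat_le_iff)
    then show "real (card {g\<in>S. cp g = y}) * phi y \<le> real (card V ^ card V) * phi y"
      using nn by (rule mult_right_mono)
  qed
  finally show ?thesis by (simp add: sum_distrib_left)
qed

lemma card_inj_lower:
  assumes "finite D" "finite T"
  shows "(card T - card D) ^ card D \<le> card {h \<in> D \<rightarrow>\<^sub>E T. inj_on h D}"
proof -
  have "card {h \<in> D \<rightarrow>\<^sub>E T. inj_on h D} = card T ^ (card D - card D) * prod ((-) (card T)) {0..<card D}"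
    by (rule card_inj_on_subset_funcset[OF assms]) simp
  also have "... = prod ((-) (card T)) {0..<card D}" by simp
  finally have eq: "card {h \<in> D \<rightarrow>\<^sub>E T. inj_on h D} = prod ((-) (card T)) {0..<card D}" .
  have "(card T - card D) ^ card D = (\<Prod>i\<in>{0..<card D}. card T - card D)" by simp
  also have "... \<le> prod ((-) (card T)) {0..<card D}"
    by (rule prod_mono) auto
  finally show ?thesis using eq by simp
qed

definition IK :: "nat \<Rightarrow> 'a set \<Rightarrow> ('a \<Rightarrow> nat) \<Rightarrow> ('a \<Rightarrow> nat) set" where
  "IK n K f = {g \<in> injs n. (\<forall>x\<in>K. g x = f x) \<and> (\<forall>x\<in>V-K. g x \<notin> f ` V)}"

lemma card_injs: "(n - card V) ^ card V \<le> card (injs n)"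
  using card_inj_lower[OF finV, of "{1..n}"] by (simp add: injs_def)

lemma IK_card:
  assumes f: "f \<in> injs n" and K: "K \<subseteq> V"
  shows "(n - 2 * card V) ^ (card V - card K) \<le> card (IK n K f)"
proof -
  let ?D = "V - K"
  let ?T = "{1..n} - f ` V"
  let ?Hs = "{h \<in> ?D \<rightarrow>\<^sub>E ?T. inj_on h ?D}"
  define mg where "mg h = (\<lambda>x. if x \<in> K then f x else h x)" for h :: "'a \<Rightarrow> nat"
  have finD: "finite ?D" using finV by simp
  have finT: "finite ?T" by simp
  have fi: "inj_on f V" "f \<in> V \<rightarrow>\<^sub>E {1..n}" using f by (auto simp: injs_def)
  have "f ` V \<subseteq> {1..n}" using fi by auto
  moreover have "card (f ` V) = card V" using fi by (simp add: card_image)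
  ultimately have cT: "card ?T = n - card V"
    using card_Diff_subset[OF finite_imageI[OF finV, of f], of "{1..n}"] by simp
  have cD: "card ?D = card V - card K" using K finV by (meson card_Diff_subset finite_subset)
  have ck: "card K \<le> card V" using K finV card_mono by blast
  have HsD: "\<And>h. h \<in> ?Hs \<Longrightarrow> h \<in> ?D \<rightarrow>\<^sub>E ?T \<and> inj_on h ?D" by (simp only: mem_Collect_eq)
  have "(n - 2 * card V) ^ (card V - card K) \<le> (card ?T - card ?D) ^ card ?D"
    unfolding cT cD by (rule power_mono) (use ck in linarith, simp)
  also have "... \<le> card ?Hs" by (rule card_inj_lower[OF finD finT])
  also have "card ?Hs = card (mg ` ?Hs)"
  proof (rule card_image[symmetric], rule inj_onI)
    fix h1 h2 assume h1: "h1 \<in> ?Hs" and h2: "h2 \<in> ?Hs" and eq: "mg h1 = mg h2"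
    show "h1 = h2"
    proof (rule ext)
      fix x show "h1 x = h2 x"
      proof (cases "x \<in> ?D")
        case True
        then have xK: "x \<notin> K" by simp
        have a: "mg h1 x = h1 x" and b: "mg h2 x = h2 x" unfolding mg_def using xK by simp_all
        have "h1 x = mg h1 x" using a by (rule sym)
        also have "... = mg h2 x" using eq by (rule fun_cong)
        also have "... = h2 x" by (rule b)
        finally show ?thesis .
      next
        case False
        have m1: "h1 \<in> ?D \<rightarrow>\<^sub>E ?T" using HsD[OF h1] by (rule conjunct1)
        have m2: "h2 \<in> ?D \<rightarrow>\<^sub>E ?T" using HsD[OF h2] by (rule conjunct1)
        show ?thesis using PiE_arb[OF m1 False] PiE_arb[OF m2 False] by (rule trans[OF _ sym])
      qed
    qed
  qed
  also have "... \<le> card (IK n K f)"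
  proof (rule card_mono)
    have "IK n K f \<subseteq> injs n" by (auto simp: IK_def)
    then show "finite (IK n K f)" using fin_injs by (rule finite_subset)
    show "mg ` ?Hs \<subseteq> IK n K f"
    proof
      fix g assume "g \<in> mg ` ?Hs"
      then obtain h where h: "h \<in> ?Hs" and g: "g = mg h" by blast
      have hm: "h \<in> ?D \<rightarrow>\<^sub>E ?T" using HsD[OF h] by (rule conjunct1)
      have hinj: "inj_on h ?D" using HsD[OF h] by (rule conjunct2)
      have hD: "\<And>x. x \<in> ?D \<Longrightarrow> h x \<in> ?T" using hm by (rule PiE_mem)
      have hout: "\<And>x. x \<notin> ?D \<Longrightarrow> h x = undefined" using hm by (rule PiE_arb)
      have gK: "\<And>x. x \<in> K \<Longrightarrow> g x = f x" by (simp add: g mg_def)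
      have gnK: "\<And>x. x \<notin> K \<Longrightarrow> g x = h x" by (simp add: g mg_def)
      have fV: "\<And>x. x \<in> V \<Longrightarrow> f x \<in> {1..n}" using fi(2) by (rule PiE_mem)
      have g1: "g \<in> V \<rightarrow>\<^sub>E {1..n}"
      proof (rule PiE_I)
        fix x assume x: "x \<in> V"
        show "g x \<in> {1..n}"
        proof (cases "x \<in> K")
          case True then show ?thesis using fV[OF x] gK by simp
        next
          case False
          then have "x \<in> ?D" using x by simp
          then have "h x \<in> ?T" by (rule hD)
          then show ?thesis using gnK[OF False] by simp
        qed
      next
        fix x assume x: "x \<notin> V"
        then have "x \<notin> K" "x \<notin> ?D" using K by auto
        then show "g x = undefined" using hout gnK by simp
      qed
      have g2: "inj_on g V"
      proof (rule inj_onI)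
        fix x y assume x: "x \<in> V" and y: "y \<in> V" and eq: "g x = g y"
        show "x = y"
        proof (cases "x \<in> K"; cases "y \<in> K")
          assume "x \<in> K" "y \<in> K"
          then have "f x = f y" using eq gK by simp
          then show ?thesis using fi(1) x y by (meson inj_onD)
        next
          assume a: "x \<in> K" "y \<notin> K"
          then have "y \<in> ?D" using y by simp
          then have "g y \<notin> f ` V" using hD gnK[OF a(2)] by simp
          moreover have "g x \<in> f ` V" using a x gK by simp
          ultimately show ?thesis using eq by simp
        next
          assume a: "x \<notin> K" "y \<in> K"
          then have "x \<in> ?D" using x by simp
          then have "g x \<notin> f ` V" using hD gnK[OF a(1)] by simp
          moreover have "g y \<in> f ` V" using a y gK by simp
          ultimately show ?thesis using eq by simp
        next
          assume a: "x \<notin> K" "y \<notin> K"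
          then have "h x = h y" using eq gnK by simp
          moreover have "x \<in> ?D" "y \<in> ?D" using a x y by auto
          ultimately show ?thesis using hinj by (meson inj_onD)
        qed
      qed
      have g3: "\<forall>x\<in>K. g x = f x" using gK by simp
      have g4: "\<forall>x\<in>V-K. g x \<notin> f ` V"
      proof
        fix x assume x: "x \<in> V - K"
        then have "h x \<in> ?T" by (rule hD)
        then show "g x \<notin> f ` V" using gnK x by simp
      qed
      have "g \<in> injs n" unfolding injs_def using g1 g2 by blast
      then show "g \<in> IK n K f" unfolding IK_def using g3 g4 by blast
    qed
  qed
  finally show ?thesis .
qed

lemma IK_weight:
  assumes f: "f \<in> injs n" and K: "K \<subseteq> V" "K \<noteq> {}" and g: "g \<in> IK n K f"
    and p: "0 \<le> p" "p \<le> (1::real)" and q: "0 \<le> q" "q \<le> (1::real)"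
  shows "p ^ (2 * card V - card K) * q ^ (2 * card E - card (EK K)) \<le>
     p ^ card (fst (cp f) \<union> fst (cp g)) * q ^ card (snd (cp f) \<union> snd (cp g)) *
     (if connected_graph (fst (cp f) \<union> fst (cp g), snd (cp f) \<union> snd (cp g)) then 1 else 0)"
proof -
  have gi: "g \<in> injs n" and gK: "\<forall>x\<in>K. g x = f x" using g by (auto simp: IK_def)
  have ginj: "inj_on g V" using gi by (simp add: injs_def)
  obtain x0 where x0: "x0 \<in> K" using K by auto
  have "f x0 \<in> fst (cp f)" "f x0 \<in> fst (cp g)" using x0 K gK by (auto simp: cp_def intro!: image_eqI[of _ _ x0])
  then have conn: "connected_graph (fst (cp f) \<union> fst (cp g), snd (cp f) \<union> snd (cp g))"
    by (rule conn_union[OF conn_cp[OF f] conn_cp[OF gi]])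
  have finK: "finite K" using K finV finite_subset by blast
  have ck: "card K \<le> card V" using K finV card_mono by blast
  have "fst (cp f) \<union> fst (cp g) \<subseteq> f ` V \<union> g ` (V - K)"
    using gK K by (auto simp: cp_def)
  then have "card (fst (cp f) \<union> fst (cp g)) \<le> card (f ` V \<union> g ` (V - K))"
    by (intro card_mono) (auto simp: finV)
  also have "... \<le> card (f ` V) + card (g ` (V - K))" by (rule card_Un_le)
  also have "... \<le> card V + card (V - K)" by (intro add_mono card_image_le) (auto simp: finV)
  also have "... = 2 * card V - card K" using card_Diff_subset[OF finK K(1)] ck by simp
  finally have cv: "card (fst (cp f) \<union> fst (cp g)) \<le> 2 * card V - card K" .
  let ?S = "image g ` EK K"
  have S1: "?S \<subseteq> snd (cp f)"
  proof
    fix x assume "x \<in> ?S"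
    then obtain ed where ed: "ed \<in> E" "ed \<subseteq> K" "x = g ` ed" by (auto simp: EK_def)
    have "g ` ed = f ` ed" by (rule image_cong[OF refl]) (use gK ed in blast)
    then have "x = f ` ed" using ed by simp
    then show "x \<in> snd (cp f)" using ed by (simp add: cp_def)
  qed
  have S2: "?S \<subseteq> snd (cp g)" by (auto simp: cp_def EK_def)
  have cS: "card ?S = card (EK K)"
    using inj_img[OF gi] by (intro card_image) (auto simp: EK_def intro: inj_on_subset)
  have finsg: "finite (snd (cp g))" by (simp add: cp_def finE)
  have "snd (cp f) \<union> snd (cp g) = snd (cp f) \<union> (snd (cp g) - ?S)" using S1 by auto
  then have "card (snd (cp f) \<union> snd (cp g)) \<le> card (snd (cp f)) + card (snd (cp g) - ?S)"
    by (simp add: card_Un_le)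
  also have "... = card E + (card E - card (EK K))"
    using card_Diff_subset[OF finite_subset[OF S2 finsg] S2] card_cp[OF f] card_cp[OF gi] cS by simp
  also have "... = 2 * card E - card (EK K)" using EK_card by simp
  finally have ce: "card (snd (cp f) \<union> snd (cp g)) \<le> 2 * card E - card (EK K)" .
  have "p ^ (2 * card V - card K) \<le> p ^ card (fst (cp f) \<union> fst (cp g))"
    using cv p by (rule power_decreasing)
  moreover have "q ^ (2 * card E - card (EK K)) \<le> q ^ card (snd (cp f) \<union> snd (cp g))"
    using ce q by (rule power_decreasing)
  ultimately have "p ^ (2 * card V - card K) * q ^ (2 * card E - card (EK K)) \<le>
     p ^ card (fst (cp f) \<union> fst (cp g)) * q ^ card (snd (cp f) \<union> snd (cp g))"
    by (rule mult_mono) (use p q in simp_all)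
  then show ?thesis using conn by simp
qed

definition gw :: "real \<Rightarrow> real \<Rightarrow> nat graph \<Rightarrow> real" where
  "gw p q G = p ^ card (fst G) * q ^ card (snd G) * (if connected_graph G then 1 else 0)"

definition W2 :: "real \<Rightarrow> real \<Rightarrow> nat graph \<Rightarrow> nat graph \<Rightarrow> real" where
  "W2 p q a b = gw p q (fst a \<union> fst b, snd a \<union> snd b)"

lemma NN_gw: "NN H n p q r = (\<Sum>F\<in>PiE {..<r} (\<lambda>_. copies H n). gw p q (union_graph r F))"
  by (simp add: NN_def gw_def)

definition pair2 :: "'b \<Rightarrow> 'b \<Rightarrow> nat \<Rightarrow> 'b" where
  "pair2 a b = (\<lambda>i. if i = 0 then a else if i = 1 then b else undefined)"

lemma PiE2: "PiE {..<2} (\<lambda>_. C) = (\<lambda>(a,b). pair2 a b) ` (C \<times> C)"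
proof
  show "PiE {..<2} (\<lambda>_. C) \<subseteq> (\<lambda>(a,b). pair2 a b) ` (C \<times> C)"
  proof
    fix F assume F: "F \<in> PiE {..<(2::nat)} (\<lambda>_. C)"
    have "F = pair2 (F 0) (F 1)"
    proof (rule ext)
      fix i show "F i = pair2 (F 0) (F 1) i"
      proof (cases "i < 2")
        case True then have "i = 0 \<or> i = 1" by auto
        then show ?thesis by (auto simp: pair2_def)
      next
        case False then show ?thesis using PiE_arb[OF F, of i] by (simp add: pair2_def)
      qed
    qed
    moreover have "F 0 \<in> C" by (rule PiE_mem[OF F]) simp
    moreover have "F 1 \<in> C" by (rule PiE_mem[OF F]) simp
    ultimately show "F \<in> (\<lambda>(a,b). pair2 a b) ` (C \<times> C)"
      by (intro image_eqI[of _ _ "(F 0, F 1)"]) auto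
  qed
  show "(\<lambda>(a,b). pair2 a b) ` (C \<times> C) \<subseteq> PiE {..<2} (\<lambda>_. C)"
  proof
    fix F assume "F \<in> (\<lambda>(a,b). pair2 a b) ` (C \<times> C)"
    then obtain a b where ab: "a \<in> C" "b \<in> C" "F = pair2 a b" by auto
    show "F \<in> PiE {..<2} (\<lambda>_. C)"
    proof (rule PiE_I)
      fix i assume "i \<in> {..<(2::nat)}"
      then have "i = 0 \<or> i = 1" by auto
      then show "F i \<in> C" using ab by (auto simp: pair2_def)
    next
      fix i assume "i \<notin> {..<(2::nat)}"
      then show "F i = undefined" using ab by (simp add: pair2_def)
    qed
  qed
qed

lemma inj_pair2: "inj_on (\<lambda>(a,b). pair2 a b) X"
proof (rule inj_onI)
  fix x y assume eq: "(\<lambda>(a,b). pair2 a b) x = (\<lambda>(a,b). pair2 a b) y"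
  obtain a b a' b' where xy: "x = (a,b)" "y = (a',b')" by (cases x, cases y) auto
  have e: "pair2 a b = pair2 a' b'" using eq xy by simp
  have "a = a'" using fun_cong[OF e, of 0] by (simp add: pair2_def)
  moreover have "b = b'" using fun_cong[OF e, of 1] by (simp add: pair2_def)
  ultimately show "x = y" using xy by simp
qed

lemma NN2: "NN H n p q 2 = (\<Sum>a\<in>copies H n. \<Sum>b\<in>copies H n. W2 p q a b)"
proof -
  have l2: "{..<2::nat} = {0,1}" by auto
  have u: "union_graph 2 (pair2 a b) = (fst a \<union> fst b, snd a \<union> snd b)" for a b :: "nat graph"
    unfolding union_graph_def l2 by (simp add: pair2_def)
  have "NN H n p q 2 = (\<Sum>F\<in>(\<lambda>(a,b). pair2 a b) ` (copies H n \<times> copies H n). gw p q (union_graph 2 F))"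
    unfolding NN_gw PiE2 ..
  also have "... = (\<Sum>x\<in>copies H n \<times> copies H n. gw p q (union_graph 2 ((\<lambda>(a,b). pair2 a b) x)))"
    by (rule sum.reindex[OF inj_pair2, unfolded comp_def])
  also have "... = (\<Sum>(a,b)\<in>copies H n \<times> copies H n. W2 p q a b)"
    by (rule sum.cong[OF refl]) (auto simp: u W2_def)
  also have "... = (\<Sum>a\<in>copies H n. \<Sum>b\<in>copies H n. W2 p q a b)"
    by (rule sum.cartesian_product[symmetric])
  finally show ?thesis .
qed

lemma N2_lower:
  assumes K: "K \<subseteq> V" "K \<noteq> {}" and p: "0 \<le> p" "p \<le> (1::real)" and q: "0 \<le> q" "q \<le> (1::real)"
  shows "real ((n - 2*card V) ^ card V) * (real ((n - 2*card V) ^ (card V - card K)) *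
           (p ^ (2 * card V - card K) * q ^ (2 * card E - card (EK K))))
     \<le> real (card V ^ card V) * (real (card V ^ card V) * NN (V,E) n p q 2)"
proof -
  let ?C = "copies (V,E) n"
  let ?I = "injs n"
  let ?w = "p ^ (2 * card V - card K) * q ^ (2 * card E - card (EK K))"
  let ?c = "real ((n - 2*card V) ^ (card V - card K))"
  define Phi where "Phi a = (\<Sum>b\<in>?C. W2 p q a b)" for a
  have W2nn: "\<And>a b. 0 \<le> W2 p q a b" using p q by (simp add: W2_def gw_def)
  have Phinn: "\<And>a. 0 \<le> Phi a" unfolding Phi_def using W2nn by (simp add: sum_nonneg)
  have wnn: "0 \<le> ?w" using p q by simp
  have step1: "(\<Sum>f\<in>?I. Phi (cp f)) \<le> real (card V ^ card V) * NN (V,E) n p q 2"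
  proof -
    have "(\<Sum>f\<in>?I. Phi (cp f)) \<le> real (card V ^ card V) * (\<Sum>y\<in>cp ` ?I. Phi y)"
      by (rule fiber_sum[OF order_refl Phinn])
    also have "(\<Sum>y\<in>cp ` ?I. Phi y) = NN (V,E) n p q 2"
      unfolding NN2 Phi_def copies_eq ..
    finally show ?thesis .
  qed
  have step2: "?c * ?w \<le> real (card V ^ card V) * Phi (cp f)" if f: "f \<in> ?I" for f
  proof -
    have "?c \<le> real (card (IK n K f))" using IK_card[OF f K(1)] by (simp only: of_nat_le_iff)
    then have "?c * ?w \<le> real (card (IK n K f)) * ?w" using wnn by (rule mult_right_mono)
    also have "... = (\<Sum>g\<in>IK n K f. ?w)" by simp
    also have "... \<le> (\<Sum>g\<in>IK n K f. W2 p q (cp f) (cp g))"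
    proof (rule sum_mono)
      fix g assume g: "g \<in> IK n K f"
      show "?w \<le> W2 p q (cp f) (cp g)"
        using IK_weight[OF f K g p q] by (simp add: W2_def gw_def)
    qed
    also have "... \<le> (\<Sum>g\<in>?I. W2 p q (cp f) (cp g))"
      by (rule sum_mono2) (use fin_injs W2nn in \<open>auto simp: IK_def\<close>)
    also have "... \<le> real (card V ^ card V) * (\<Sum>y\<in>cp ` ?I. W2 p q (cp f) y)"
      by (rule fiber_sum) (auto simp: W2nn)
    also have "(\<Sum>y\<in>cp ` ?I. W2 p q (cp f) y) = Phi (cp f)" unfolding Phi_def copies_eq ..
    finally show ?thesis .
  qed
  have "real (card ?I) * (?c * ?w) = (\<Sum>f\<in>?I. ?c * ?w)" by simp
  also have "... \<le> (\<Sum>f\<in>?I. real (card V ^ card V) * Phi (cp f))" by (rule sum_mono) (rule step2)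
  also have "... = real (card V ^ card V) * (\<Sum>f\<in>?I. Phi (cp f))" by (simp add: sum_distrib_left)
  also have "... \<le> real (card V ^ card V) * (real (card V ^ card V) * NN (V,E) n p q 2)"
    by (rule mult_left_mono[OF step1]) simp
  finally have main: "real (card ?I) * (?c * ?w) \<le> real (card V ^ card V) * (real (card V ^ card V) * NN (V,E) n p q 2)" .
  have "(n - 2*card V) ^ card V \<le> (n - card V) ^ card V" by (rule power_mono) auto
  also have "... \<le> card ?I" by (rule card_injs)
  finally have "real ((n - 2*card V) ^ card V) \<le> real (card ?I)" by (simp only: of_nat_le_iff)
  then have "real ((n - 2*card V) ^ card V) * (?c * ?w) \<le> real (card ?I) * (?c * ?w)"
    by (rule mult_right_mono) (use wnn in simp)
  then show ?thesis using main by linarith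
qed

lemma key_ineq:
  fixes a q m :: real and k eK :: nat
  assumes q: "0 < q" "q < 1" and X: "1 \<le> a * q powr m" and k: "k \<ge> 1"
    and dens: "real eK \<le> m * real k"
  shows "a * q powr m \<le> a ^ k * q ^ eK"
proof -
  have qm: "0 < q powr m" using q by simp
  have a1: "1 / q powr m \<le> a" using X qm by (simp add: divide_le_eq mult.commute)
  have apos: "0 < a" using a1 qm by (smt (verit) divide_pos_pos)
  have inv: "q powr (-m) = 1 / q powr m" by (rule powr_minus_divide)
  have "(q powr (-m)) ^ (k-1) \<le> a ^ (k-1)"
    using a1 inv by (intro power_mono) auto
  moreover have "(q powr (-m)) ^ (k-1) = q powr (-m * real (k-1))"
  proof -
    have "(q powr (-m)) ^ (k-1) = (q powr (-m)) powr real (k-1)" using q by (simp add: powr_realpow)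
    also have "... = q powr (-m * real (k-1))" by (rule powr_powr)
    finally show ?thesis .
  qed
  ultimately have b1: "q powr (-m * real (k-1)) \<le> a ^ (k-1)" by simp
  have b2: "q ^ eK = q powr real eK" using q by (simp add: powr_realpow)
  have "q powr m \<le> q powr (-m * real (k-1) + real eK)"
  proof (rule powr_mono')
    show "-m * real (k-1) + real eK \<le> m" using dens k by (simp add: of_nat_diff algebra_simps)
  qed (use q in auto)
  also have "... = q powr (-m * real (k-1)) * q ^ eK" unfolding b2 by (rule powr_add)
  also have "... \<le> a ^ (k-1) * q ^ eK" using b1 q by (intro mult_right_mono) auto
  finally have "q powr m \<le> a ^ (k-1) * q ^ eK" .
  then have "a * q powr m \<le> a * (a ^ (k-1) * q ^ eK)" using apos by simp
  also have "... = a ^ k * q ^ eK" using k by (simp add: power_eq_if[of a k] mult.assoc)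
  finally show ?thesis .
qed

definition Dc :: real where "Dc = real ((4 * card V) ^ (3 * card V + 1) + card V ^ (2 * card V) * 4 ^ card V)"

lemma xK_bound:
  assumes K: "K \<subseteq> V" "K \<noteq> {}" and p: "0 < p" "p < 1" and q: "0 < q" "q < 1"
    and X: "1 \<le> real n * p * q powr max_density (V,E)" and Cne: "copies (V,E) n \<noteq> {}"
  shows "((real n * p) ^ (card V - card K) * q ^ (card E - card (EK K)))\<^sup>2 * (real n * p * q powr max_density (V,E))
      \<le> Dc * NN (V,E) n p q 2"
proof -
  define m where "m = max_density (V,E)"
  define a where "a = real n * p"
  define v where "v = card V"
  define k where "k = card K"
  define e where "e = card E"
  define eK where "eK = card (EK K)"
  define N2 where "N2 = NN (V,E) n p q 2"
  define x where "x = a ^ (v - k) * q ^ (e - eK)"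
  have m0: "0 \<le> m" unfolding m_def by (rule density0)
  have qm: "0 < q powr m" "q powr m \<le> 1" using q m0 by (auto intro: powr_le1)
  have Xa: "1 \<le> a * q powr m" using X by (simp add: a_def m_def)
  have a0: "0 \<le> a" using p by (simp add: a_def)
  have aX: "a * q powr m \<le> a" using mult_left_mono[OF qm(2) a0] by simp
  have a1: "1 \<le> a" using Xa aX by linarith
  have an: "a \<le> real n" using mult_left_mono[of p 1 "real n"] p by (simp add: a_def)
  have n1: "1 \<le> real n" using a1 an by linarith
  have finK: "finite K" using K finV finite_subset by blast
  have k1: "k \<ge> 1" using finK K(2) by (simp add: k_def Suc_le_eq card_gt_0_iff)
  have kv: "k \<le> v" using K finV card_mono by (simp add: k_def v_def card_mono)
  have ee: "eK \<le> e" using EK_card by (simp add: eK_def e_def)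
  have dens: "real eK \<le> m * real k" using density[OF K] by (simp add: eK_def m_def k_def mult.commute)
  have v1: "v \<ge> 1" using v_pos by (simp add: v_def)
  have N2nn: "0 \<le> N2" unfolding N2_def NN2 W2_def gw_def using p q by (auto intro!: sum_nonneg)
  have xnn: "0 \<le> x" using a1 q by (simp add: x_def)
  have D1: "real ((4 * v) ^ (3 * v + 1)) \<le> Dc" "real (v ^ (2 * v) * 4 ^ v) \<le> Dc"
    by (simp_all add: Dc_def v_def)
  show ?thesis
  proof (cases "n < 4 * v")
    case True
    obtain c where c: "c \<in> copies (V,E) n" using Cne by auto
    have cc: "connected_graph c" "card (fst c) = v" "card (snd c) = e"
      using copy_props[OF c] by (auto simp: v_def e_def)
    have finC: "finite (copies (V,E) n)" by (rule fin_copies)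
    have W2nn: "\<And>a b. 0 \<le> W2 p q a b" using p q by (simp add: W2_def gw_def)
    have "W2 p q c c \<le> (\<Sum>b\<in>copies (V,E) n. W2 p q c b)"
      by (rule member_le_sum[OF c]) (use W2nn finC in auto)
    also have "... \<le> N2" unfolding N2_def NN2
      by (rule member_le_sum[OF c]) (use W2nn finC in \<open>auto intro: sum_nonneg\<close>)
    finally have "W2 p q c c \<le> N2" .
    moreover have "W2 p q c c = p ^ v * q ^ e" using cc by (simp add: W2_def gw_def)
    ultimately have N2l: "p ^ v * q ^ e \<le> N2" by simp
    have "q powr (m * real v) \<le> q powr real e"
    proof (rule powr_mono')
      show "real e \<le> m * real v" using density[OF order_refl Vne] EK_V by (simp add: e_def m_def v_def mult.commute)
    qed (use q in auto)
    also have "q powr real e = q ^ e" using q by (simp add: powr_realpow)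
    also have "q powr (m * real v) = (q powr m) ^ v"
    proof -
      have "(q powr m) ^ v = (q powr m) powr real v" using qm by (simp add: powr_realpow)
      also have "... = q powr (m * real v)" by (rule powr_powr)
      finally show ?thesis by simp
    qed
    finally have qe: "(q powr m) ^ v \<le> q ^ e" .
    have "1 / a \<le> q powr m" using Xa a1 by (simp add: divide_le_eq mult.commute)
    then have "(1 / a) ^ v \<le> (q powr m) ^ v" using a1 by (intro power_mono) auto
    then have "(1/a) ^ v \<le> q ^ e" using qe by (rule order_trans)
    then have "p ^ v * (1/a) ^ v \<le> p ^ v * q ^ e" using p by (intro mult_left_mono) auto
    moreover have "p ^ v * (1/a) ^ v = 1 / real n ^ v"
    proof -
      have "p * (1/a) = 1 / real n" using p n1 by (simp add: a_def)
      then have "(p * (1/a)) ^ v = (1 / real n) ^ v" by simp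
      then show ?thesis by (simp only: power_mult_distrib power_one_over)
    qed
    ultimately have N2n: "1 / real n ^ v \<le> N2" using N2l by simp
    have "x \<le> a ^ (v - k)" unfolding x_def using a1 q by (simp add: power_le_one mult_left_le)
    also have "... \<le> a ^ v" using a1 by (simp add: power_increasing)
    finally have xa: "x \<le> a ^ v" .
    have "x\<^sup>2 * (a * q powr m) \<le> (a ^ v)\<^sup>2 * a"
      using xa xnn aX a1 qm by (intro mult_mono power_mono) auto
    also have "... = a ^ (2 * v + 1)" by (simp add: power_mult[symmetric] mult.commute)
    also have "... \<le> real n ^ (2 * v + 1)" using an a1 by (intro power_mono) auto
    also have "... = real n ^ (3 * v + 1) * (1 / real n ^ v)"
      using n1 by (simp add: field_simps power_add[symmetric])
    also have "... \<le> real n ^ (3 * v + 1) * N2" using N2n n1 by (intro mult_left_mono) auto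
    also have "... \<le> real ((4 * v) ^ (3 * v + 1)) * N2"
    proof (rule mult_right_mono[OF _ N2nn])
      have "real n \<le> real (4 * v)" using True by simp
      then show "real n ^ (3 * v + 1) \<le> real ((4 * v) ^ (3 * v + 1))"
        using n1 by (simp only: of_nat_power) (intro power_mono, auto)
    qed
    also have "... \<le> Dc * N2" using D1(1) N2nn by (rule mult_right_mono)
    finally show ?thesis by (simp add: x_def a_def m_def v_def k_def e_def eK_def N2_def)
  next
    case False
    have pq: "0 \<le> p" "p \<le> 1" "0 \<le> q" "q \<le> 1" using p q by auto
    have low: "real ((n - 2*v) ^ v) * (real ((n - 2*v) ^ (v - k)) * (p ^ (2 * v - k) * q ^ (2 * e - eK)))
        \<le> real (v ^ v) * (real (v ^ v) * N2)"
      using N2_lower[OF K pq] by (simp add: v_def k_def e_def eK_def N2_def)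
    have nh: "real n / 2 \<le> real (n - 2 * v)" using False by (simp add: of_nat_diff)
    have nh0: "0 \<le> real n / 2" by simp
    have vk: "2 * v - k = v + (v - k)" using kv by simp
    have "(real n / 2) ^ (2 * v - k) = (real n / 2) ^ v * (real n / 2) ^ (v - k)"
      unfolding vk by (rule power_add)
    also have "... \<le> real ((n - 2*v) ^ v) * real ((n - 2*v) ^ (v - k))"
      using nh nh0 by (simp only: of_nat_power) (intro mult_mono power_mono, auto)
    finally have nn: "(real n / 2) ^ (2 * v - k) \<le> real ((n - 2*v) ^ v) * real ((n - 2*v) ^ (v - k))" .
    have w0: "0 \<le> p ^ (2 * v - k) * q ^ (2 * e - eK)" using pq by simp
    have "a ^ (2 * v - k) * q ^ (2 * e - eK) = 2 ^ (2 * v - k) * ((real n / 2) ^ (2 * v - k) * (p ^ (2 * v - k) * q ^ (2 * e - eK)))"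
      by (simp add: a_def power_mult_distrib power_divide)
    also have "... \<le> 2 ^ (2 * v - k) * (real ((n - 2*v) ^ v) * real ((n - 2*v) ^ (v - k)) * (p ^ (2 * v - k) * q ^ (2 * e - eK)))"
      using nn w0 by (intro mult_left_mono mult_right_mono) auto
    also have "... \<le> 2 ^ (2 * v - k) * (real (v ^ v) * (real (v ^ v) * N2))"
      using low by (intro mult_left_mono) (auto simp: mult.assoc)
    also have "... \<le> 4 ^ v * (real (v ^ v) * (real (v ^ v) * N2))"
    proof (rule mult_right_mono)
      have "(2::real) ^ (2 * v - k) \<le> 2 ^ (2 * v)" by (intro power_increasing) auto
      also have "... = 4 ^ v" by (simp add: power_mult)
      finally show "(2::real) ^ (2 * v - k) \<le> 4 ^ v" .
    qed (use N2nn in simp)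
    also have "... = real (v ^ (2 * v) * 4 ^ v) * N2" by (simp add: power_mult mult_2 power_add)
    also have "... \<le> Dc * N2" using D1(2) N2nn by (rule mult_right_mono)
    finally have up: "a ^ (2 * v - k) * q ^ (2 * e - eK) \<le> Dc * N2" .
    have ki: "a * q powr m \<le> a ^ k * q ^ eK" by (rule key_ineq[OF q Xa k1 dens])
    have "x\<^sup>2 * (a * q powr m) \<le> x\<^sup>2 * (a ^ k * q ^ eK)"
      using ki by (intro mult_left_mono) auto
    also have "... = a ^ (2 * (v - k) + k) * q ^ (2 * (e - eK) + eK)"
      by (simp add: x_def power_mult_distrib power_add power_mult[symmetric] mult_ac)
    also have "2 * (v - k) + k = 2 * v - k" using kv by simp
    also have "2 * (e - eK) + eK = 2 * e - eK" using ee by simp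
    finally have "x\<^sup>2 * (a * q powr m) \<le> Dc * N2" using up by simp
    then show ?thesis by (simp add: x_def a_def m_def v_def k_def e_def eK_def N2_def)
  qed
qed

lemma gw_nn: "0 \<le> p \<Longrightarrow> 0 \<le> q \<Longrightarrow> 0 \<le> gw p q G" by (simp add: gw_def)

lemma NN_nn: "0 \<le> p \<Longrightarrow> 0 \<le> q \<Longrightarrow> 0 \<le> NN H n p q r"
  unfolding NN_gw by (intro sum_nonneg gw_nn)

lemma M_final:
  assumes fin: "finite VG" and L: "card VG \<le> L" and L1: "1 \<le> L" and es: "\<forall>ed\<in>EG. ed \<subseteq> VG"
    and p: "0 < p" "p < 1" and q: "0 < q" "q < 1"
    and X: "1 \<le> real n * p * q powr max_density (V,E)" and Cne: "copies (V,E) n \<noteq> {}"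
  shows "(\<Sum>b\<in>{b \<in> copies (V,E) n. fst b \<inter> VG \<noteq> {}}. p ^ card (fst b - VG) * q ^ card (snd b - EG))
     \<le> 2 ^ card V * real L ^ card V * sqrt (Dc * NN (V,E) n p q 2 / (real n * p * q powr max_density (V,E)))"
proof -
  let ?X = "real n * p * q powr max_density (V,E)"
  let ?s = "sqrt (Dc * NN (V,E) n p q 2 / ?X)"
  have "0 \<le> Dc" by (simp add: Dc_def)
  moreover have "0 \<le> NN (V,E) n p q 2" using p q by (intro NN_nn) auto
  moreover have "0 < ?X" using X by linarith
  ultimately have s0: "0 \<le> ?s" by simp
  have "(\<Sum>b\<in>{b \<in> copies (V,E) n. fst b \<inter> VG \<noteq> {}}. p ^ card (fst b - VG) * q ^ card (snd b - EG))
     \<le> (\<Sum>K\<in>Pow V - {{}}. real L ^ card K * ((real n * p) ^ (card V - card K) * q ^ (card E - card (EK K))))"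
    by (rule M_bound[OF fin L es]) (use p q in auto)
  also have "... \<le> (\<Sum>K\<in>Pow V - {{}}. real L ^ card V * ?s)"
  proof (rule sum_mono)
    fix K assume K: "K \<in> Pow V - {{}}"
    then have KV: "K \<subseteq> V" "K \<noteq> {}" by auto
    let ?x = "(real n * p) ^ (card V - card K) * q ^ (card E - card (EK K))"
    have "?x\<^sup>2 * ?X \<le> Dc * NN (V,E) n p q 2" by (rule xK_bound[OF KV p q X Cne])
    then have "?x\<^sup>2 \<le> Dc * NN (V,E) n p q 2 / ?X" using X by (simp add: le_divide_eq)
    then have xs: "?x \<le> ?s" by (rule real_le_rsqrt)
    have "card K \<le> card V" using KV finV card_mono by blast
    then have "real L ^ card K \<le> real L ^ card V" using L1 by (intro power_increasing) auto
    moreover have "0 \<le> ?x" using p q by simp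
    ultimately show "real L ^ card K * ?x \<le> real L ^ card V * ?s"
      using xs L1 by (intro mult_mono) auto
  qed
  also have "... = real (card (Pow V - {{}})) * (real L ^ card V * ?s)" by simp
  also have "... \<le> 2 ^ card V * (real L ^ card V * ?s)"
  proof (rule mult_right_mono)
    have "card (Pow V - {{}}) \<le> card (Pow V)" using finV by (intro card_mono) auto
    also have "... = 2 ^ card V" using finV by (simp add: card_Pow)
    finally have "card (Pow V - {{}}) \<le> 2 ^ card V" .
    then have "real (card (Pow V - {{}})) \<le> real ((2::nat) ^ card V)" by (simp only: of_nat_le_iff)
    then show "real (card (Pow V - {{}})) \<le> 2 ^ card V" by simp
  qed (use L1 s0 in simp)
  finally show ?thesis by (simp add: mult.assoc)
qed

definition sg :: "nat \<Rightarrow> nat \<Rightarrow> nat" where "sg a i = (if i < a then i else Suc i)"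

lemma sg_img: "a < Suc R \<Longrightarrow> sg a ` {..<R} = {..<Suc R} - {a}"
proof
  show "sg a ` {..<R} \<subseteq> {..<Suc R} - {a}" by (auto simp: sg_def)
  assume a: "a < Suc R"
  show "{..<Suc R} - {a} \<subseteq> sg a ` {..<R}"
  proof
    fix j assume j: "j \<in> {..<Suc R} - {a}"
    show "j \<in> sg a ` {..<R}"
    proof (cases "j < a")
      case True then show ?thesis using a by (intro image_eqI[of _ _ j]) (auto simp: sg_def)
    next
      case False
      then have "j > a" using j by auto
      then show ?thesis using j by (intro image_eqI[of _ _ "j - 1"]) (auto simp: sg_def)
    qed
  qed
qed

lemma main_red:
  assumes r: "r \<ge> 2" and p: "0 < p" "p < 1" and q: "0 < q" "q < 1"
    and X: "1 \<le> real n * p * q powr max_density (V,E)"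
  shows "NN (V,E) n p q r \<le> real r * NN (V,E) n p q (r - 1) *
     (2 ^ card V * real ((r - 1) * card V) ^ card V * sqrt (Dc * NN (V,E) n p q 2 / (real n * p * q powr max_density (V,E))))"
proof -
  define R where "R = r - 1"
  have rR: "r = Suc R" "R \<ge> 1" using r by (auto simp: R_def)
  define C where "C = copies (V,E) n"
  define Bd where "Bd = 2 ^ card V * real (R * card V) ^ card V * sqrt (Dc * NN (V,E) n p q 2 / (real n * p * q powr max_density (V,E)))"
  have "0 \<le> Dc" by (simp add: Dc_def)
  moreover have "0 \<le> NN (V,E) n p q 2" using p q by (intro NN_nn) auto
  moreover have "0 < real n * p * q powr max_density (V,E)" using X by linarith
  ultimately have "0 \<le> sqrt (Dc * NN (V,E) n p q 2 / (real n * p * q powr max_density (V,E)))" by simp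
  then have Bd0: "0 \<le> Bd" unfolding Bd_def by simp
  have p0: "0 \<le> p" and q0: "0 \<le> q" using p q by auto
  have finC: "finite C" unfolding C_def by (rule fin_copies)
  define Pr where "Pr = PiE {..<r} (\<lambda>_. C)"
  define PR where "PR = PiE {..<R} (\<lambda>_. C)"
  have finPr: "finite Pr" unfolding Pr_def using finC by (intro finite_PiE) auto
  have finPR: "finite PR" unfolding PR_def using finC by (intro finite_PiE) auto
  define cond where "cond a F = (connected_graph (U ({..<r}-{a}) F) \<and> fst (F a) \<inter> fst (U ({..<r}-{a}) F) \<noteq> {})" for a and F :: "nat \<Rightarrow> nat graph"
  have stepA: "gw p q (union_graph r F) \<le> (\<Sum>a<r. if cond a F then gw p q (U {..<r} F) else 0)"
    if F: "F \<in> Pr" for F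
  proof (cases "connected_graph (U {..<r} F)")
    case True
    have FC: "\<And>i. i < r \<Longrightarrow> F i \<in> C" using F unfolding Pr_def by (auto intro: PiE_mem)
    have cF: "\<forall>i<r. connected_graph (F i)" using FC copy_props(1) unfolding C_def by blast
    have es: "\<forall>c<r. \<forall>e\<in>snd (F c). e \<subseteq> fst (F c)" using FC copy_props(2) unfolding C_def by blast
    obtain a where a: "a < r" "cond a F" using leaf[OF r cF es True] unfolding cond_def by blast
    have "gw p q (union_graph r F) = (if cond a F then gw p q (U {..<r} F) else 0)"
      using a by (simp add: union_graph_U)
    also have "... \<le> (\<Sum>a<r. if cond a F then gw p q (U {..<r} F) else 0)"
      by (rule member_le_sum) (use a gw_nn p0 q0 in auto)
    finally show ?thesis .
  next
    case False
    then have "gw p q (union_graph r F) = 0" by (simp add: gw_def union_graph_U)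
    also have "0 \<le> (\<Sum>a<r. if cond a F then gw p q (U {..<r} F) else 0)"
      using gw_nn p0 q0 by (intro sum_nonneg) auto
    finally show ?thesis .
  qed
  have stepC: "(\<Sum>F\<in>Pr. if cond a F then gw p q (U {..<r} F) else 0) \<le> NN (V,E) n p q R * Bd"
    if a: "a < r" for a
  proof -
    define Phi where "Phi F = (restrict (\<lambda>i. F (sg a i)) {..<R}, F a)" for F :: "nat \<Rightarrow> nat graph"
    define psi where "psi y = gw p q (U {..<R} (fst y)) *
       (if fst (snd y) \<inter> fst (U {..<R} (fst y)) \<noteq> {}
        then p ^ card (fst (snd y) - fst (U {..<R} (fst y))) * q ^ card (snd (snd y) - snd (U {..<R} (fst y))) else 0)"
      for y :: "(nat \<Rightarrow> nat graph) \<times> nat graph"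
    have psinn: "0 \<le> psi y" for y unfolding psi_def using gw_nn p0 q0 by simp
    have simg: "sg a ` {..<R} = {..<r} - {a}" using sg_img a rR by simp
    have UPhi: "U {..<R} (fst (Phi F)) = U ({..<r} - {a}) F" for F
    proof -
      have "U {..<R} (fst (Phi F)) = U (sg a ` {..<R}) F" by (simp add: U_def Phi_def)
      then show ?thesis using simg by simp
    qed
    have PhiS: "Phi ` Pr \<subseteq> PR \<times> C"
    proof
      fix y assume "y \<in> Phi ` Pr"
      then obtain F where F: "F \<in> Pr" "y = Phi F" by blast
      have FC: "\<And>i. i < r \<Longrightarrow> F i \<in> C" using F unfolding Pr_def by (auto intro: PiE_mem)
      have "restrict (\<lambda>i. F (sg a i)) {..<R} \<in> PR"
        unfolding PR_def using FC rR by (auto simp: sg_def)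
      moreover have "F a \<in> C" using FC a by simp
      ultimately show "y \<in> PR \<times> C" using F by (simp add: Phi_def)
    qed
    have injPhi: "inj_on Phi Pr"
    proof (rule inj_onI)
      fix F1 F2 assume F1: "F1 \<in> Pr" and F2: "F2 \<in> Pr" and eq: "Phi F1 = Phi F2"
      have m1: "F1 \<in> PiE {..<r} (\<lambda>_. C)" and m2: "F2 \<in> PiE {..<r} (\<lambda>_. C)" using F1 F2 by (simp_all add: Pr_def)
      have ea: "F1 a = F2 a" using eq by (simp add: Phi_def)
      have er: "restrict (\<lambda>i. F1 (sg a i)) {..<R} = restrict (\<lambda>i. F2 (sg a i)) {..<R}"
        using eq by (simp add: Phi_def)
      show "F1 = F2"
      proof (rule ext)
        fix j show "F1 j = F2 j"
        proof (cases "j < r")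
          case True
          show ?thesis
          proof (cases "j = a")
            case True then show ?thesis using ea by simp
          next
            case False
            then have "j \<in> sg a ` {..<R}" using simg \<open>j < r\<close> by auto
            then obtain i where i: "i < R" "j = sg a i" by auto
            show ?thesis using fun_cong[OF er, of i] i by simp
          qed
        next
          case False
          then have "j \<notin> {..<r}" by simp
          then show ?thesis using PiE_arb[OF m1] PiE_arb[OF m2] by simp
        qed
      qed
    qed
    have stepC1: "(if cond a F then gw p q (U {..<r} F) else 0) \<le> psi (Phi F)" if F: "F \<in> Pr" for F
    proof (cases "cond a F")
      case True
      have FC: "\<And>i. i < r \<Longrightarrow> F i \<in> C" using F unfolding Pr_def by (auto intro: PiE_mem)
      have finF: "\<And>i. i < r \<Longrightarrow> finite (fst (F i)) \<and> finite (snd (F i))"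
        using FC copy_props(3,6) unfolding C_def by blast
      define G' where "G' = U ({..<r} - {a}) F"
      have cG: "connected_graph G'" and meet: "fst (F a) \<inter> fst G' \<noteq> {}"
        using True by (simp_all add: cond_def G'_def)
      have ins: "insert a ({..<r} - {a}) = {..<r}" using a by auto
      have UF: "U {..<r} F = (fst (F a) \<union> fst G', snd (F a) \<union> snd G')"
        using U_insert[of a "{..<r} - {a}" F] ins by (simp add: G'_def)
      have finG: "finite (fst G')" "finite (snd G')" unfolding G'_def U_def using finF by auto
      have finA: "finite (fst (F a))" "finite (snd (F a))" using finF a by auto
      have c1: "card (fst (F a) \<union> fst G') = card (fst G') + card (fst (F a) - fst G')"
      proof -
        have e: "fst (F a) \<union> fst G' = fst G' \<union> (fst (F a) - fst G')" by auto
        have "card (fst G' \<union> (fst (F a) - fst G')) = card (fst G') + card (fst (F a) - fst G')"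
          by (rule card_Un_disjoint) (use finG finA in auto)
        then show ?thesis unfolding e .
      qed
      have c2: "card (snd (F a) \<union> snd G') = card (snd G') + card (snd (F a) - snd G')"
      proof -
        have e: "snd (F a) \<union> snd G' = snd G' \<union> (snd (F a) - snd G')" by auto
        have "card (snd G' \<union> (snd (F a) - snd G')) = card (snd G') + card (snd (F a) - snd G')"
          by (rule card_Un_disjoint) (use finG finA in auto)
        then show ?thesis unfolding e .
      qed
      have "gw p q (U {..<r} F) \<le> p ^ card (fst (F a) \<union> fst G') * q ^ card (snd (F a) \<union> snd G')"
        unfolding UF gw_def using p0 q0 by simp
      also have "... = gw p q G' * (p ^ card (fst (F a) - fst G') * q ^ card (snd (F a) - snd G'))"
        unfolding c1 c2 gw_def using cG by (simp add: power_add mult_ac)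
      also have "... = psi (Phi F)"
        unfolding psi_def using UPhi[of F] meet by (simp add: Phi_def G'_def)
      finally show ?thesis using True by simp
    next
      case False then show ?thesis using psinn by simp
    qed
    have "(\<Sum>F\<in>Pr. if cond a F then gw p q (U {..<r} F) else 0) \<le> (\<Sum>F\<in>Pr. psi (Phi F))"
      by (rule sum_mono) (rule stepC1)
    also have "... = (\<Sum>y\<in>Phi ` Pr. psi y)" by (rule sum.reindex[OF injPhi, symmetric, unfolded comp_def])
    also have "... \<le> (\<Sum>y\<in>PR \<times> C. psi y)"
      by (rule sum_mono2) (use finPR finC PhiS psinn in auto)
    also have "... = (\<Sum>G\<in>PR. \<Sum>b\<in>C. psi (G, b))"
      using sum.cartesian_product[of "\<lambda>G b. psi (G, b)" C PR] by (simp only: case_prod_eta)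
    also have "... \<le> (\<Sum>G\<in>PR. gw p q (U {..<R} G) * Bd)"
    proof (rule sum_mono)
      fix G assume G: "G \<in> PR"
      define VG where "VG = fst (U {..<R} G)"
      define EG where "EG = snd (U {..<R} G)"
      have GC: "\<And>i. i < R \<Longrightarrow> G i \<in> C" using G unfolding PR_def by (auto intro: PiE_mem)
      have Cne: "copies (V,E) n \<noteq> {}" using GC[of 0] rR unfolding C_def by auto
      have GP: "\<And>i. i < R \<Longrightarrow> finite (fst (G i)) \<and> card (fst (G i)) = card V \<and> (\<forall>ed\<in>snd (G i). ed \<subseteq> fst (G i))"
        using GC copy_props(2,3,4) unfolding C_def by blast
      have finVG: "finite VG" unfolding VG_def U_def using GP by auto
      have "card VG \<le> (\<Sum>i<R. card (fst (G i)))" unfolding VG_def U_def by (simp add: card_UN_le)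
      also have "... = (\<Sum>i<R. card V)" using GP by (intro sum.cong) auto
      finally have cVG: "card VG \<le> R * card V" by simp
      have L1: "1 \<le> R * card V" using rR v_pos by simp
      have esG: "\<forall>ed\<in>EG. ed \<subseteq> VG"
        unfolding VG_def EG_def U_def using GP by fastforce
      have "(\<Sum>b\<in>C. psi (G, b)) = gw p q (U {..<R} G) *
         (\<Sum>b\<in>C. if fst b \<inter> VG \<noteq> {} then p ^ card (fst b - VG) * q ^ card (snd b - EG) else 0)"
        by (simp add: psi_def sum_distrib_left VG_def EG_def cong: if_cong)
      also have "(\<Sum>b\<in>C. if fst b \<inter> VG \<noteq> {} then p ^ card (fst b - VG) * q ^ card (snd b - EG) else 0)
          = (\<Sum>b\<in>{b \<in> C. fst b \<inter> VG \<noteq> {}}. p ^ card (fst b - VG) * q ^ card (snd b - EG))"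
        by (rule sum.inter_filter[OF finC, symmetric])
      also have "... \<le> Bd"
        unfolding Bd_def C_def by (rule M_final[OF finVG cVG _ esG p q X Cne]) (use L1 in simp)
      finally show "(\<Sum>b\<in>C. psi (G, b)) \<le> gw p q (U {..<R} G) * Bd"
        using gw_nn[OF p0 q0] by (simp add: mult_left_mono)
    qed
    also have "... = NN (V,E) n p q R * Bd"
      by (simp add: NN_gw union_graph_U sum_distrib_right PR_def C_def)
    finally show ?thesis .
  qed
  have "NN (V,E) n p q r = (\<Sum>F\<in>Pr. gw p q (union_graph r F))" by (simp add: NN_gw Pr_def C_def)
  also have "... \<le> (\<Sum>F\<in>Pr. \<Sum>a<r. if cond a F then gw p q (U {..<r} F) else 0)"
    by (rule sum_mono) (rule stepA)
  also have "... = (\<Sum>a<r. \<Sum>F\<in>Pr. if cond a F then gw p q (U {..<r} F) else 0)" by (rule sum.swap)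
  also have "... \<le> (\<Sum>a<r. NN (V,E) n p q R * Bd)" by (rule sum_mono) (rule stepC, simp)
  also have "... = real r * NN (V,E) n p q R * Bd" by simp
  finally show ?thesis by (simp add: Bd_def R_def)
qed

lemma Dc_pos: "0 < Dc"
proof -
  have "0 < (4 * card V) ^ (3 * card V + 1)" using v_pos by simp
  then show ?thesis unfolding Dc_def by linarith
qed

end

theorem lemma6p2:
  fixes H :: "'a graph" and r :: nat
  assumes "is_graph H" and "connected_graph H" and "r \<ge> 2"
  shows "\<exists>C>0. \<forall>(n::nat) (p::real) (q::real).
           0 < p \<and> p < 1 \<and> 0 < q \<and> q < 1 \<and> real n * p * q powr max_density H \<ge> 1 \<longrightarrow>
           NN H n p q r \<le> C * NN H n p q (r - 1) * sqrt (NN H n p q 2)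
                          * (real n * p * q powr max_density H) powr (-1/2)"
proof -
  obtain V E where H: "H = (V, E)" by (cases H)
  have "gs V E"
  proof
    show "finite V" using assms(1) by (simp add: H is_graph_def)
    show "\<And>e. e \<in> E \<Longrightarrow> e \<subseteq> V \<and> card e = 2" using assms(1) by (simp add: H is_graph_def)
    show "V \<noteq> {}" using assms(2) by (simp add: H connected_graph_def)
    show "connected_graph (V, E)" using assms(2) by (simp add: H)
  qed
  then interpret gs V E .
  define L where "L = (r - 1) * card V"
  define Cst where "Cst = real r * 2 ^ card V * real L ^ card V * sqrt Dc"
  have L1: "1 \<le> L" using assms(3) v_pos by (simp add: L_def)
  have Cpos: "0 < Cst" unfolding Cst_def using Dc_pos L1 assms(3) by simp
  show ?thesis
  proof (intro exI[of _ Cst] conjI allI impI)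
    show "0 < Cst" by (rule Cpos)
    fix n :: nat and p q :: real
    assume A: "0 < p \<and> p < 1 \<and> 0 < q \<and> q < 1 \<and> real n * p * q powr max_density H \<ge> 1"
    define X where "X = real n * p * q powr max_density (V,E)"
    have p: "0 < p" "p < 1" and q: "0 < q" "q < 1" and X: "1 \<le> real n * p * q powr max_density (V,E)"
      using A by (auto simp: H)
    have X0: "0 < X" using X by (simp add: X_def)
    have red: "NN (V,E) n p q r \<le> real r * NN (V,E) n p q (r - 1) *
       (2 ^ card V * real L ^ card V * sqrt (Dc * NN (V,E) n p q 2 / X))"
      using main_red[OF assms(3) p q X] by (simp add: L_def X_def)
    have sx: "X powr (-1/2) = 1 / sqrt X"
    proof -
      have "X powr (-1/2) = X powr (- (1/2))" by simp
      also have "... = 1 / X powr (1/2)" by (rule powr_minus_divide)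
      also have "... = 1 / sqrt X" using X0 by (simp add: powr_half_sqrt)
      finally show ?thesis .
    qed
    have "sqrt (Dc * NN (V,E) n p q 2 / X) = sqrt Dc * sqrt (NN (V,E) n p q 2) * (1 / sqrt X)"
      by (simp add: real_sqrt_mult real_sqrt_divide)
    then have eq: "real r * NN (V,E) n p q (r - 1) * (2 ^ card V * real L ^ card V * sqrt (Dc * NN (V,E) n p q 2 / X))
        = Cst * NN (V,E) n p q (r - 1) * sqrt (NN (V,E) n p q 2) * X powr (-1/2)"
      unfolding sx Cst_def by (simp add: mult_ac)
    have "NN (V,E) n p q r \<le> Cst * NN (V,E) n p q (r - 1) * sqrt (NN (V,E) n p q 2) * X powr (-1/2)"
      using red eq by (rule ord_le_eq_trans)
    then show "NN H n p q r \<le> Cst * NN H n p q (r - 1) * sqrt (NN H n p q 2)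
                          * (real n * p * q powr max_density H) powr (-1/2)"
      by (simp only: H X_def)
  qed
qed

end
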